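(* Let $\mathcal{X}$ be a finite set of $n$ items and let $\mathcal{S}$ be a collection of distinct subsets of $\mathcal{X}$, each of size at least $2$. Let $G(\mathcal{S})$ be the integer matrix with one row $g_{x,C}^{T}$ for each $C\in\mathcal{S}$ and each $x\in C$. Then the full-rank CDM is identifiable up to a shift from the choice probabilities on $\mathcal{S}$ — i.e. whenever $u,u'\in\mathbb{R}^{n(n-1)}$ satisfy $P_u(x\mid C)=P_{u'}(x\mid C)$ for all $C\in\mathcal{S}$, $x\in C$, we have $u'-u=\alpha\mathbf{1}$ for some $\alpha\in\mathbb{R}$ — if and only if $\mathrm{rank}(G(\mathcal{S}))=n(n-1)-1$.
   Context: A (full-rank) CDM on $\mathcal{X}$ has parameter vector $u=(u_{xz})_{x\neq z}\in\mathbb{R}^{n(n-1)}$ and choice probabilities, for $C\subseteq\mathcal{X}$, $|C|\ge2$, $x\in C$, $P_u(x\mid C)=\dfrac{\exp\big(\sum_{z\in C\setminus\{x\}}u_{xz}\big)}{\sum_{y\in C}\exp\big(\sum_{z\in C\setminus\{y\}}u_{yz}\big)}$. For a set $C$ and $x\in C$, $g_{x,C}\in\mathbb{Z}^{n(n-1)}$ is the integer vector with $g_{x,C}^{T}u=\sum_{y\in C\setminus\{x\}}\Big([u_{xy}-u_{yx}]+\sum_{z\in C\setminus\{x,y\}}[u_{xz}-u_{yz}]\Big)$ for all $u$. $\mathbf{1}$ denotes the all-ones vector. *)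

theory Defs
  imports "HOL-Analysis.Analysis"
begin

text \<open>Items form a finite type 'a (X = UNIV, n = CARD('a)).  A CDM parameter is
  u :: "'a \<times> 'a \<Rightarrow> real"; only the off-diagonal entries u(x,z), x \<noteq> z, are used.\<close>

definition cdm_prob :: "('a \<times> 'a \<Rightarrow> real) \<Rightarrow> 'a set \<Rightarrow> 'a \<Rightarrow> real" where
  "cdm_prob u C x =
     exp (\<Sum>z\<in>C - {x}. u (x, z)) / (\<Sum>y\<in>C. exp (\<Sum>z\<in>C - {y}. u (y, z)))"

definition g_form :: "'a set \<Rightarrow> 'a \<Rightarrow> ('a \<times> 'a \<Rightarrow> real) \<Rightarrow> real" where
  "g_form C x u =
     (\<Sum>y\<in>C - {x}. (u (x, y) - u (y, x)) + (\<Sum>z\<in>C - {x, y}. (u (x, z) - u (y, z))))"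

text \<open>The coefficient vector g_{x,C}, indexed by pairs; diagonal coordinates
  (which are not parameters) are set to 0, so they do not affect the rank.\<close>
definition g_vec :: "'a set \<Rightarrow> 'a \<Rightarrow> real ^ ('a::finite \<times> 'a)" where
  "g_vec C x = (\<chi> p. if fst p \<noteq> snd p then g_form C x (\<lambda>q. if q = p then 1 else 0) else 0)"

definition rank_G :: "'a::finite set set \<Rightarrow> nat" where
  "rank_G S = dim (span {g_vec C x | C x. C \<in> S \<and> x \<in> C})"

end

theory Submission
  imports Defs
begin


lemma g_form_cong:
  assumes "\<And>a b. a \<noteq> b \<Longrightarrow> u (a, b) = v (a, b)"
  shows "g_form C x u = g_form C x v"
  unfolding g_form_def
proof (intro sum.cong refl)
  fix y assume y: "y \<in> C - {x}"
  have "(\<Sum>z\<in>C - {x, y}. u (x, z) - u (y, z)) = (\<Sum>z\<in>C - {x, y}. v (x, z) - v (y, z))"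
    using assms by (intro sum.cong refl) auto
  moreover have "u (x, y) = v (x, y)" "u (y, x) = v (y, x)" using y assms by auto
  ultimately show "u (x, y) - u (y, x) + (\<Sum>z\<in>C - {x, y}. u (x, z) - u (y, z)) =
    v (x, y) - v (y, x) + (\<Sum>z\<in>C - {x, y}. v (x, z) - v (y, z))" by simp
qed

lemma g_form_add:
  "g_form C x (\<lambda>q. u q + v q) = g_form C x u + g_form C x v"
proof -
  have pt: "(u (x, y) + v (x, y)) - (u (y, x) + v (y, x)) +
      (\<Sum>z\<in>C - {x, y}. (u (x, z) + v (x, z)) - (u (y, z) + v (y, z))) =
      (u (x, y) - u (y, x) + (\<Sum>z\<in>C - {x, y}. u (x, z) - u (y, z))) +
      (v (x, y) - v (y, x) + (\<Sum>z\<in>C - {x, y}. v (x, z) - v (y, z)))" for y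
  proof -
    have "(\<Sum>z\<in>C - {x, y}. (u (x, z) + v (x, z)) - (u (y, z) + v (y, z))) =
        (\<Sum>z\<in>C - {x, y}. (u (x, z) - u (y, z)) + (v (x, z) - v (y, z)))"
      by (rule sum.cong) auto
    also have "\<dots> = (\<Sum>z\<in>C - {x, y}. u (x, z) - u (y, z)) + (\<Sum>z\<in>C - {x, y}. v (x, z) - v (y, z))"
      by (rule sum.distrib)
    finally show ?thesis by linarith
  qed
  show ?thesis unfolding g_form_def by (simp only: pt sum.distrib)
qed

lemma g_form_scale:
  "g_form C x (\<lambda>q. c * u q) = c * g_form C x u"
  unfolding g_form_def by (simp add: sum_distrib_left algebra_simps)

lemma g_form_zero: "g_form C x (\<lambda>q. 0) = 0"
  unfolding g_form_def by simp

lemma g_form_sum: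
  assumes "finite P"
  shows "g_form C x (\<lambda>q. \<Sum>p\<in>P. f p q) = (\<Sum>p\<in>P. g_form C x (f p))"
  using assms
proof (induction P rule: finite_induct)
  case empty
  then show ?case by (simp add: g_form_zero)
next
  case (insert a F)
  then show ?case by (simp add: g_form_add)
qed

lemma g_vec_inner:
  fixes y :: "real ^ ('a::finite \<times> 'a)"
  assumes "\<And>p. fst p = snd p \<Longrightarrow> y $ p = 0"
  shows "g_vec C x \<bullet> y = g_form C x (\<lambda>q. y $ q)"
proof -
  have "g_vec C x \<bullet> y = (\<Sum>p\<in>UNIV. g_form C x (\<lambda>q. if q = p then 1 else 0) * y $ p)"
    unfolding g_vec_def inner_vec_def using assms
    by (intro sum.cong refl) auto
  also have "\<dots> = (\<Sum>p\<in>UNIV. g_form C x (\<lambda>q. y $ p * (if q = p then 1 else 0)))"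
    by (simp add: g_form_scale mult.commute)
  also have "\<dots> = g_form C x (\<lambda>q. \<Sum>p\<in>UNIV. y $ p * (if q = p then 1 else 0))"
    by (rule g_form_sum[symmetric]) simp
  also have "(\<lambda>q. \<Sum>p\<in>UNIV. y $ p * (if q = p then 1 else (0::real))) = (\<lambda>q. y $ q)"
    by (simp add: if_distrib cong: if_cong)
  finally show ?thesis .
qed

definition sfun :: "('a \<times> 'a \<Rightarrow> real) \<Rightarrow> 'a set \<Rightarrow> 'a \<Rightarrow> real" where
  "sfun u C y = (\<Sum>z\<in>C - {y}. u (y, z))"

lemma g_form_sfun:
  assumes "finite C" "x \<in> C"
  shows "g_form C x u = (\<Sum>y\<in>C - {x}. sfun u C x - sfun u C y)"
  unfolding g_form_def
proof (intro sum.cong refl)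
  fix y assume y: "y \<in> C - {x}"
  have "sfun u C x = u (x, y) + (\<Sum>z\<in>C - {x, y}. u (x, z))"
  proof -
    have e: "C - {x} = insert y (C - {x, y})" using y by auto
    show ?thesis unfolding sfun_def e using assms by simp
  qed
  moreover have "sfun u C y = u (y, x) + (\<Sum>z\<in>C - {x, y}. u (y, z))"
  proof -
    have e: "C - {y} = insert x (C - {x, y})" using y assms by auto
    show ?thesis unfolding sfun_def e using assms y by simp
  qed
  ultimately show "u (x, y) - u (y, x) + (\<Sum>z\<in>C - {x, y}. u (x, z) - u (y, z)) = sfun u C x - sfun u C y"
    by (simp add: sum_subtractf)
qed


lemma const_iff_g:
  fixes t :: "'a \<Rightarrow> real"
  assumes "finite C" "C \<noteq> {}"
  shows "(\<forall>x\<in>C. (\<Sum>y\<in>C - {x}. t x - t y) = 0) \<longleftrightarrow> (\<exists>c. \<forall>x\<in>C. t x = c)"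
proof
  assume h: "\<forall>x\<in>C. (\<Sum>y\<in>C - {x}. t x - t y) = 0"
  have "t x = sum t C / card C" if x: "x \<in> C" for x
  proof -
    have c1: "card C \<ge> 1" using assms by (simp add: Suc_le_eq card_gt_0_iff)
    have "(\<Sum>y\<in>C - {x}. t x - t y) = (real (card C) - 1) * t x - (sum t C - t x)"
      using assms x c1 by (simp add: sum_subtractf sum_diff1 of_nat_diff)
    also have "\<dots> = card C * t x - sum t C" by (simp add: algebra_simps)
    finally have "card C * t x = sum t C" using h x by simp
    moreover have "card C > 0" using assms by (simp add: card_gt_0_iff)
    ultimately show ?thesis by (simp add: field_simps)
  qed
  then show "\<exists>c. \<forall>x\<in>C. t x = c" by blast
next
  assume "\<exists>c. \<forall>x\<in>C. t x = c"
  then show "\<forall>x\<in>C. (\<Sum>y\<in>C - {x}. t x - t y) = 0" by auto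
qed

lemma prob_iff_const:
  assumes "finite C" "C \<noteq> {}"
  shows "(\<forall>x\<in>C. cdm_prob u C x = cdm_prob u' C x) \<longleftrightarrow>
         (\<exists>c. \<forall>x\<in>C. sfun u' C x - sfun u C x = c)"
proof -
  define Z where "Z = (\<Sum>y\<in>C. exp (sfun u C y))"
  define Z' where "Z' = (\<Sum>y\<in>C. exp (sfun u' C y))"
  have Zp: "Z > 0" unfolding Z_def using assms by (intro sum_pos) auto
  have Zp': "Z' > 0" unfolding Z'_def using assms by (intro sum_pos) auto
  have P: "cdm_prob u C x = exp (sfun u C x) / Z" "cdm_prob u' C x = exp (sfun u' C x) / Z'" for x
    unfolding cdm_prob_def Z_def Z'_def sfun_def by simp_all
  show ?thesis
  proof
    assume h: "\<forall>x\<in>C. cdm_prob u C x = cdm_prob u' C x"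
    have "sfun u' C x - sfun u C x = ln (Z' / Z)" if x: "x \<in> C" for x
    proof -
      have "exp (sfun u C x) / Z = exp (sfun u' C x) / Z'" using h x P by simp
      then have "exp (sfun u' C x) / exp (sfun u C x) = Z' / Z"
        using Zp Zp' by (simp add: field_simps)
      then have "exp (sfun u' C x - sfun u C x) = Z' / Z" by (simp add: exp_diff)
      then show ?thesis by (metis ln_exp)
    qed
    then show "\<exists>c. \<forall>x\<in>C. sfun u' C x - sfun u C x = c" by blast
  next
    assume "\<exists>c. \<forall>x\<in>C. sfun u' C x - sfun u C x = c"
    then obtain c where "\<forall>x\<in>C. sfun u' C x - sfun u C x = c" by blast
    then have c: "\<And>x. x \<in> C \<Longrightarrow> sfun u' C x = sfun u C x + c" by force
    have "Z' = exp c * Z" unfolding Z'_def Z_def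
      by (simp add: c exp_add sum_distrib_left mult.commute)
    then show "\<forall>x\<in>C. cdm_prob u C x = cdm_prob u' C x"
      using Zp by (simp add: P c exp_add)
  qed
qed

lemma sfun_diff: "sfun (\<lambda>q. u' q - u q) C x = sfun u' C x - sfun u C x"
  unfolding sfun_def by (simp add: sum_subtractf)

lemma prob_iff_g:
  assumes "finite C" "C \<noteq> {}"
  shows "(\<forall>x\<in>C. cdm_prob u C x = cdm_prob u' C x) \<longleftrightarrow>
         (\<forall>x\<in>C. g_form C x (\<lambda>q. u' q - u q) = 0)"
proof -
  have "(\<forall>x\<in>C. g_form C x (\<lambda>q. u' q - u q) = 0) \<longleftrightarrow>
        (\<forall>x\<in>C. (\<Sum>y\<in>C - {x}. sfun (\<lambda>q. u' q - u q) C x - sfun (\<lambda>q. u' q - u q) C y) = 0)"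
    using assms by (simp add: g_form_sfun)
  also have "\<dots> \<longleftrightarrow> (\<exists>c. \<forall>x\<in>C. sfun (\<lambda>q. u' q - u q) C x = c)"
    by (rule const_iff_g[OF assms])
  finally show ?thesis using prob_iff_const[OF assms] by (simp add: sfun_diff)
qed


theorem lemma2:
  fixes S :: "'a::finite set set"
  assumes n2: "CARD('a) \<ge> 2"
    and sizes: "\<forall>C\<in>S. card C \<ge> 2"
  shows "(\<forall>u u' :: 'a \<times> 'a \<Rightarrow> real.
            (\<forall>C\<in>S. \<forall>x\<in>C. cdm_prob u C x = cdm_prob u' C x) \<longrightarrow>
            (\<exists>\<alpha>::real. \<forall>x z. x \<noteq> z \<longrightarrow> u' (x, z) - u (x, z) = \<alpha>))
         \<longleftrightarrow> int (rank_G S) = int (CARD('a) * (CARD('a) - 1)) - 1"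
proof -
  let ?N = "CARD('a) * (CARD('a) - 1)"
  define rows where "rows = {g_vec C x | C x. C \<in> S \<and> x \<in> C}"
  define E :: "(real ^ ('a \<times> 'a)) set" where "E = {axis p 1 | p. fst p \<noteq> snd p}"
  define D where "D = span E"
  define A where "A = span rows"
  define K where "K = {y \<in> D. \<forall>x\<in>A. orthogonal x y}"
  define one :: "real ^ ('a \<times> 'a)" where "one = (\<chi> p. if fst p \<noteq> snd p then 1 else 0)"
  have Cfin: "finite C" for C :: "'a set" by simp
  have Cne: "C \<noteq> {}" if "C \<in> S" for C
    using sizes that by (metis card.empty not_numeral_le_zero)
  have Dchar: "y \<in> D \<longleftrightarrow> (\<forall>p. fst p = snd p \<longrightarrow> y $ p = 0)" for y
  proof
    assume "y \<in> D"
    moreover have "D \<subseteq> {y. \<forall>p. fst p = snd p \<longrightarrow> y $ p = 0}"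
      unfolding D_def
    proof (rule span_minimal)
      show "E \<subseteq> {y. \<forall>p. fst p = snd p \<longrightarrow> y $ p = 0}" unfolding E_def by (auto simp: axis_def)
      show "subspace {y::real^('a\<times>'a). \<forall>p. fst p = snd p \<longrightarrow> y $ p = 0}"
        unfolding subspace_def by auto
    qed
    ultimately show "\<forall>p. fst p = snd p \<longrightarrow> y $ p = 0" by auto
  next
    assume h: "\<forall>p. fst p = snd p \<longrightarrow> y $ p = 0"
    have inE: "\<And>p. fst p \<noteq> snd p \<Longrightarrow> axis p 1 \<in> E" unfolding E_def by blast
    have "y = (\<Sum>p\<in>{p. fst p \<noteq> snd p}. y $ p *\<^sub>R axis p 1)"
      using h by (auto simp: vec_eq_iff axis_def if_distrib cong: if_cong)
    also have "\<dots> \<in> D" unfolding D_def by (intro span_sum span_scale span_base inE) simp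
    finally show "y \<in> D" .
  qed
  have offcard: "card {p::'a\<times>'a. fst p \<noteq> snd p} = ?N"
  proof -
    have "{p::'a\<times>'a. fst p \<noteq> snd p} = UNIV - (\<lambda>a. (a,a)) ` UNIV" by auto
    moreover have "card ((\<lambda>a::'a. (a,a)) ` UNIV) = CARD('a)" by (simp add: card_image inj_on_def)
    ultimately have "card {p::'a\<times>'a. fst p \<noteq> snd p} = card ((UNIV::'a set) \<times> (UNIV::'a set)) - CARD('a)"
      by (simp add: card_Diff_subset)
    then show ?thesis by (simp add: card_cartesian_product diff_mult_distrib2)
  qed
  have dimD: "dim D = ?N"
  proof -
    have "E \<subseteq> Basis" unfolding E_def by auto
    then have "independent E" using independent_Basis independent_mono by blast
    then have "dim D = card E" unfolding D_def by (rule dim_span_eq_card_independent)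
    also have "E = (\<lambda>p. axis p (1::real)) ` {p. fst p \<noteq> snd p}" unfolding E_def by blast
    also have "card \<dots> = card {p::'a\<times>'a. fst p \<noteq> snd p}"
      by (rule card_image) (auto simp: inj_on_def axis_eq_axis)
    finally show ?thesis using offcard by simp
  qed
  have rowsD: "rows \<subseteq> D" unfolding rows_def using Dchar by (auto simp: g_vec_def)
  have subD: "subspace D" unfolding D_def by (rule subspace_span)
  have AD: "A \<subseteq> D" unfolding A_def by (rule span_minimal[OF rowsD subD])
  have dimsum: "dim K + dim A = dim D" unfolding K_def
    by (rule dim_subspace_orthogonal_to_vectors[OF _ subD AD]) (simp add: A_def)
  have subK: "subspace K"
  proof -
    have "K = D \<inter> {y. \<forall>x\<in>A. orthogonal x y}" unfolding K_def by auto
    then show ?thesis using subspace_inter[OF subD subspace_orthogonal_to_vectors] by simp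
  qed
  have Kchar: "y \<in> K \<longleftrightarrow> y \<in> D \<and> (\<forall>C\<in>S. \<forall>x\<in>C. g_form C x (\<lambda>q. y $ q) = 0)" for y
  proof (cases "y \<in> D")
    case True
    then have yd: "\<And>p. fst p = snd p \<Longrightarrow> y $ p = 0" using Dchar by auto
    have "(\<forall>x\<in>A. orthogonal x y) \<longleftrightarrow> (\<forall>r\<in>rows. orthogonal r y)"
    proof
      assume "\<forall>x\<in>A. orthogonal x y" then show "\<forall>r\<in>rows. orthogonal r y"
        unfolding A_def using span_base by blast
    next
      assume h: "\<forall>r\<in>rows. orthogonal r y"
      show "\<forall>x\<in>A. orthogonal x y"
      proof
        fix a assume a: "a \<in> A"
        have "orthogonal y a"
          by (rule orthogonal_to_span[OF a[unfolded A_def]]) (use h orthogonal_commute in blast)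
        then show "orthogonal a y" by (simp add: orthogonal_commute)
      qed
    qed
    also have "\<dots> \<longleftrightarrow> (\<forall>C\<in>S. \<forall>x\<in>C. g_form C x (\<lambda>q. y $ q) = 0)"
    proof
      assume h: "\<forall>r\<in>rows. orthogonal r y"
      show "\<forall>C\<in>S. \<forall>x\<in>C. g_form C x (\<lambda>q. y $ q) = 0"
      proof (intro ballI)
        fix C x assume "C \<in> S" "x \<in> C"
        then have "g_vec C x \<in> rows" unfolding rows_def by blast
        then have "g_vec C x \<bullet> y = 0" using h by (simp add: orthogonal_def)
        then show "g_form C x (\<lambda>q. y $ q) = 0" by (simp add: g_vec_inner[OF yd])
      qed
    next
      assume h: "\<forall>C\<in>S. \<forall>x\<in>C. g_form C x (\<lambda>q. y $ q) = 0"
      show "\<forall>r\<in>rows. orthogonal r y"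
      proof
        fix r assume "r \<in> rows"
        then obtain C x where r: "r = g_vec C x" "C \<in> S" "x \<in> C" unfolding rows_def by blast
        then show "orthogonal r y" using h by (simp add: orthogonal_def g_vec_inner[OF yd])
      qed
    qed
    finally show ?thesis unfolding K_def using True by auto
  next
    case False
    then show ?thesis unfolding K_def by auto
  qed
  obtain a b :: 'a where ab: "a \<noteq> b"
  proof -
    have "\<not> CARD('a) \<le> Suc 0" using n2 by simp
    then have "\<not> (\<forall>a1\<in>(UNIV::'a set). \<forall>a2\<in>UNIV. a1 = a2)"
      using card_le_Suc0_iff_eq[of "UNIV::'a set"] by simp
    then show ?thesis using that by blast
  qed
  have one_ne: "one \<noteq> 0"
  proof
    assume "one = 0"
    then have "one $ (a, b) = 0" by simp
    then show False using ab unfolding one_def by simp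
  qed
  have oneK: "one \<in> K"
  proof -
    have "one \<in> D" using Dchar unfolding one_def by simp
    moreover have "g_form C x (\<lambda>q. one $ q) = 0" if "C \<in> S" "x \<in> C" for C x
    proof -
      have "g_form C x (\<lambda>q. one $ q) = g_form C x (\<lambda>q. 1)"
        by (rule g_form_cong) (simp add: one_def)
      also have "\<dots> = (\<Sum>y\<in>C - {x}. sfun (\<lambda>q. 1) C x - sfun (\<lambda>q. 1) C y)"
        using that by (simp add: g_form_sfun)
      also have "\<dots> = 0"
        using that by (auto simp: sfun_def card_Diff_singleton intro!: sum.neutral)
      finally show ?thesis .
    qed
    ultimately show ?thesis using Kchar by blast
  qed
  have span1K: "span {one} \<subseteq> K" using span_minimal[OF _ subK] oneK by blast
  have dim1: "dim (span {one}) = 1" using one_ne by simp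
  have Kiff: "dim K = 1 \<longleftrightarrow> K \<subseteq> span {one}"
  proof
    assume "dim K = 1"
    then have "span {one} = K"
      using subspace_dim_equal[OF subspace_span subK span1K] dim1 by simp
    then show "K \<subseteq> span {one}" by simp
  next
    assume "K \<subseteq> span {one}"
    then have "K = span {one}" using span1K by blast
    then show "dim K = 1" using dim1 by simp
  qed
  have rank: "rank_G S = dim A" unfolding rank_G_def A_def rows_def by simp
  have arith: "int (rank_G S) = int ?N - 1 \<longleftrightarrow> dim K = 1"
    using dimsum dimD rank by linarith
  have LHS: "(\<forall>u u' :: 'a \<times> 'a \<Rightarrow> real.
            (\<forall>C\<in>S. \<forall>x\<in>C. cdm_prob u C x = cdm_prob u' C x) \<longrightarrow>
            (\<exists>\<alpha>::real. \<forall>x z. x \<noteq> z \<longrightarrow> u' (x, z) - u (x, z) = \<alpha>))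
         \<longleftrightarrow> K \<subseteq> span {one}"
  proof
    assume L: "\<forall>u u' :: 'a \<times> 'a \<Rightarrow> real.
            (\<forall>C\<in>S. \<forall>x\<in>C. cdm_prob u C x = cdm_prob u' C x) \<longrightarrow>
            (\<exists>\<alpha>::real. \<forall>x z. x \<noteq> z \<longrightarrow> u' (x, z) - u (x, z) = \<alpha>)"
    show "K \<subseteq> span {one}"
    proof
      fix y assume yK: "y \<in> K"
      then have yD: "\<And>p. fst p = snd p \<Longrightarrow> y $ p = 0" using Kchar Dchar by blast
      have yg: "\<And>C x. C \<in> S \<Longrightarrow> x \<in> C \<Longrightarrow> g_form C x (\<lambda>q. y $ q) = 0" using yK Kchar by blast
      have "\<forall>C\<in>S. \<forall>x\<in>C. cdm_prob (\<lambda>q. 0) C x = cdm_prob (\<lambda>q. y $ q) C x"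
      proof
        fix C assume C: "C \<in> S"
        show "\<forall>x\<in>C. cdm_prob (\<lambda>q. 0) C x = cdm_prob (\<lambda>q. y $ q) C x"
          using prob_iff_g[OF Cfin Cne[OF C], of "\<lambda>q. 0" "\<lambda>q. y $ q"] yg[OF C] by simp
      qed
      then obtain \<alpha> where al: "\<And>x z. x \<noteq> z \<Longrightarrow> y $ (x, z) - 0 = \<alpha>" using L by blast
      have "y = \<alpha> *\<^sub>R one"
      proof (subst vec_eq_iff, intro allI)
        fix p :: "'a \<times> 'a"
        obtain x z where p: "p = (x, z)" by (cases p)
        show "y $ p = (\<alpha> *\<^sub>R one) $ p"
          using al[of x z] yD[of p] unfolding p one_def by (cases "x = z") auto
      qed
      then show "y \<in> span {one}" by (simp add: span_scale span_base)
    qed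
  next
    assume Ksub: "K \<subseteq> span {one}"
    show "\<forall>u u' :: 'a \<times> 'a \<Rightarrow> real.
            (\<forall>C\<in>S. \<forall>x\<in>C. cdm_prob u C x = cdm_prob u' C x) \<longrightarrow>
            (\<exists>\<alpha>::real. \<forall>x z. x \<noteq> z \<longrightarrow> u' (x, z) - u (x, z) = \<alpha>)"
    proof (intro allI impI)
      fix u u' :: "'a \<times> 'a \<Rightarrow> real"
      assume eq: "\<forall>C\<in>S. \<forall>x\<in>C. cdm_prob u C x = cdm_prob u' C x"
      define y :: "real ^ ('a \<times> 'a)" where "y = (\<chi> p. if fst p \<noteq> snd p then u' p - u p else 0)"
      have "y \<in> D" using Dchar unfolding y_def by simp
      moreover have "g_form C x (\<lambda>q. y $ q) = 0" if C: "C \<in> S" and x: "x \<in> C" for C x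
      proof -
        have "g_form C x (\<lambda>q. y $ q) = g_form C x (\<lambda>q. u' q - u q)"
          by (rule g_form_cong) (simp add: y_def)
        also have "\<dots> = 0" using prob_iff_g[OF Cfin Cne[OF C], of u u'] eq C x by blast
        finally show ?thesis .
      qed
      ultimately have "y \<in> K" using Kchar by blast
      then have "y \<in> span {one}" using Ksub by blast
      then obtain c where c: "y = c *\<^sub>R one" by (auto simp: span_singleton)
      show "\<exists>\<alpha>::real. \<forall>x z. x \<noteq> z \<longrightarrow> u' (x, z) - u (x, z) = \<alpha>"
      proof (intro exI allI impI)
        fix x z :: 'a assume "x \<noteq> z"
        then show "u' (x, z) - u (x, z) = c"
          using arg_cong[OF c, of "\<lambda>v. v $ (x, z)"] unfolding y_def one_def by simp
      qed
    qed
  qed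
  show ?thesis using LHS Kiff arith by simp
qed

end
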